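(* Let $X\subseteq I$ be an itemset and let $W$ be any descendant of $X$ in the set-enumeration tree. Then $$u(W)\le SUM(X.pu)+SUM(X.rpu).$$
   Context: Let $I$ be a finite set of items. An uncertain database $D=\{T_1,\dots,T_n\}$ is a finite collection of transactions with each $T_c\subseteq I$. Each item $i\in T_c$ has a quantity $q(i,T_c)>0$ and an existence probability $p(i,T_c)\in(0,1]$. Each item $i\in I$ has an external utility $pr(i)\in\mathbb{R}$, which may be positive or negative. Utility quantities: - $u(i,T_c)=pr(i)\,q(i,T_c)$. - For $X\subseteq T_c$: $u(X,T_c)=\sum_{i\in X}u(i,T_c)$. - $u(X)=\sum_{T_c\in D,\ X\subseteq T_c}u(X,T_c)$. Fix a total processing order on $I$. The paper sorts items by ascending $RTWU$ and places all items with negative external utility after the others. The set-enumeration tree has root $\emptyset$, and the children of a node $X$ are the sets $X\cup\{i\}$ with $i$ after every item of $X$. Hence the descendants of $X$ are the itemsets $W\supsetneq X$ such that every item of $W\setminus X$ comes after every item of $X$. For $X\subseteq T_c$ define: - $pu(X,T_c)=\sum_{i\in X,\ pr(i)>0}u(i,T_c)$; - $rpu(X,T_c)=\sum u(i,T_c)$ over $i\in T_c$ with $pr(i)>0$ and $i$ after every item of $X$. Finally $SUM(X.pu)=\sum_{T_c\in D,\ X\subseteq T_c}pu(X,T_c)$ and $SUM(X.rpu)=\sum_{T_c\in D,\ X\subseteq T_c}rpu(X,T_c)$. *)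

theory Defs
  imports Complex_Main
begin

text \<open>An uncertain database is a list D of transactions (sets of items); the
transaction D ! c carries quantities q c i and probabilities p c i.
The processing order is a strict total order r on the item set I:
(a, b) \<in> r means "a comes before b".\<close>

definition uncertain_db ::
  "'a set \<Rightarrow> 'a set list \<Rightarrow> (nat \<Rightarrow> 'a \<Rightarrow> real) \<Rightarrow> (nat \<Rightarrow> 'a \<Rightarrow> real) \<Rightarrow> bool" where
  "uncertain_db I D q p \<longleftrightarrow> finite I \<and>
     (\<forall>c < length D. D ! c \<subseteq> I \<and>
        (\<forall>i \<in> D ! c. q c i > 0 \<and> 0 < p c i \<and> p c i \<le> 1))"

definition util_item :: "('a \<Rightarrow> real) \<Rightarrow> (nat \<Rightarrow> 'a \<Rightarrow> real) \<Rightarrow> 'a \<Rightarrow> nat \<Rightarrow> real" where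
  "util_item pr q i c = pr i * q c i"

definition util_in :: "('a \<Rightarrow> real) \<Rightarrow> (nat \<Rightarrow> 'a \<Rightarrow> real) \<Rightarrow> 'a set \<Rightarrow> nat \<Rightarrow> real" where
  "util_in pr q X c = (\<Sum>i\<in>X. util_item pr q i c)"

definition util :: "'a set list \<Rightarrow> ('a \<Rightarrow> real) \<Rightarrow> (nat \<Rightarrow> 'a \<Rightarrow> real) \<Rightarrow> 'a set \<Rightarrow> real" where
  "util D pr q X = (\<Sum>c \<in> {c. c < length D \<and> X \<subseteq> D ! c}. util_in pr q X c)"

definition pu :: "('a \<Rightarrow> real) \<Rightarrow> (nat \<Rightarrow> 'a \<Rightarrow> real) \<Rightarrow> 'a set \<Rightarrow> nat \<Rightarrow> real" where
  "pu pr q X c = (\<Sum>i \<in> {i \<in> X. pr i > 0}. util_item pr q i c)"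

definition rpu :: "'a set list \<Rightarrow> ('a \<times> 'a) set \<Rightarrow> ('a \<Rightarrow> real) \<Rightarrow> (nat \<Rightarrow> 'a \<Rightarrow> real)
    \<Rightarrow> 'a set \<Rightarrow> nat \<Rightarrow> real" where
  "rpu D r pr q X c =
     (\<Sum>i \<in> {i \<in> D ! c. pr i > 0 \<and> (\<forall>x\<in>X. (x, i) \<in> r)}. util_item pr q i c)"

definition SUM_pu :: "'a set list \<Rightarrow> ('a \<Rightarrow> real) \<Rightarrow> (nat \<Rightarrow> 'a \<Rightarrow> real) \<Rightarrow> 'a set \<Rightarrow> real" where
  "SUM_pu D pr q X = (\<Sum>c \<in> {c. c < length D \<and> X \<subseteq> D ! c}. pu pr q X c)"

definition SUM_rpu :: "'a set list \<Rightarrow> ('a \<times> 'a) set \<Rightarrow> ('a \<Rightarrow> real) \<Rightarrow> (nat \<Rightarrow> 'a \<Rightarrow> real)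
    \<Rightarrow> 'a set \<Rightarrow> real" where
  "SUM_rpu D r pr q X = (\<Sum>c \<in> {c. c < length D \<and> X \<subseteq> D ! c}. rpu D r pr q X c)"

definition descendant :: "'a set \<Rightarrow> ('a \<times> 'a) set \<Rightarrow> 'a set \<Rightarrow> 'a set \<Rightarrow> bool" where
  "descendant I r X W \<longleftrightarrow> W \<subseteq> I \<and> X \<subset> W \<and> (\<forall>w \<in> W - X. \<forall>x \<in> X. (x, w) \<in> r)"

end

theory Submission
  imports Defs
begin

lemma sum_split_pred:
  assumes "finite A"
  shows "sum f A = sum f {i \<in> A. P i} + sum f {i \<in> A. \<not> P i}"
proof -
  have "A = {i \<in> A. P i} \<union> {i \<in> A. \<not> P i}" by auto
  then have "sum f A = sum f ({i \<in> A. P i} \<union> {i \<in> A. \<not> P i})" by simp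
  also have "\<dots> = sum f {i \<in> A. P i} + sum f {i \<in> A. \<not> P i}"
    using assms by (intro sum.union_disjoint) auto
  finally show ?thesis .
qed

theorem lemma3:
  fixes I :: "'a set" and D :: "'a set list"
    and q p :: "nat \<Rightarrow> 'a \<Rightarrow> real" and pr :: "'a \<Rightarrow> real"
    and r :: "('a \<times> 'a) set" and X W :: "'a set"
  assumes "uncertain_db I D q p"
    and "strict_linear_order_on I r"
    and "X \<subseteq> I"
    and "descendant I r X W"
  shows "util D pr q W \<le> SUM_pu D pr q X + SUM_rpu D r pr q X"
proof -
  have finI: "finite I" and sub: "\<And>c. c < length D \<Longrightarrow> D ! c \<subseteq> I"
    and qpos: "\<And>c i. c < length D \<Longrightarrow> i \<in> D ! c \<Longrightarrow> q c i > 0"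
    using assms(1) unfolding uncertain_db_def by auto
  have XW: "X \<subset> W" and WI: "W \<subseteq> I" and ord: "\<forall>w \<in> W - X. \<forall>x \<in> X. (x, w) \<in> r"
    using assms(4) unfolding descendant_def by auto
  have upos: "util_item pr q i c \<ge> 0" if "c < length D" "i \<in> D ! c" "pr i > 0" for i c
    unfolding util_item_def using qpos[OF that(1,2)] that(3) by simp
  have uneg: "util_item pr q i c \<le> 0" if "c < length D" "i \<in> D ! c" "\<not> pr i > 0" for i c
    unfolding util_item_def using qpos[OF that(1,2)] that(3) by (simp add: mult_nonpos_nonneg)
  define CW where "CW = {c. c < length D \<and> W \<subseteq> D ! c}"
  define CX where "CX = {c. c < length D \<and> X \<subseteq> D ! c}"
  have CWX: "CW \<subseteq> CX" using XW unfolding CW_def CX_def by auto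
  have finCX: "finite CX" unfolding CX_def by auto
  have nn: "pu pr q X c + rpu D r pr q X c \<ge> 0" if "c \<in> CX" for c
  proof -
    from that have c: "c < length D" "X \<subseteq> D ! c" unfolding CX_def by auto
    have "pu pr q X c \<ge> 0" unfolding pu_def
      using c upos by (intro sum_nonneg) blast
    moreover have "rpu D r pr q X c \<ge> 0" unfolding rpu_def
      using c upos by (intro sum_nonneg) blast
    ultimately show ?thesis by simp
  qed
  have pt: "util_in pr q W c \<le> pu pr q X c + rpu D r pr q X c" if "c \<in> CW" for c
  proof -
    from that have c: "c < length D" "W \<subseteq> D ! c" unfolding CW_def by auto
    have finD: "finite (D ! c)" using sub[OF c(1)] finI finite_subset by blast
    have finW: "finite W" using c(2) finD finite_subset by blast
    have finX: "finite X" using XW finW finite_subset by blast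
    have "util_in pr q W c = (\<Sum>i\<in>X. util_item pr q i c) + (\<Sum>i\<in>W - X. util_item pr q i c)"
      unfolding util_in_def using finW XW
      using sum.subset_diff[of X W "\<lambda>i. util_item pr q i c"] by simp
    moreover have "(\<Sum>i\<in>X. util_item pr q i c) \<le> pu pr q X c"
    proof -
      have "(\<Sum>i\<in>X. util_item pr q i c) = (\<Sum>i\<in>{i \<in> X. pr i > 0}. util_item pr q i c) + (\<Sum>i\<in>{i \<in> X. \<not> pr i > 0}. util_item pr q i c)"
        using finX by (rule sum_split_pred)
      moreover have "(\<Sum>i\<in>{i \<in> X. \<not> pr i > 0}. util_item pr q i c) \<le> 0"
        using c XW uneg by (intro sum_nonpos) blast
      ultimately show ?thesis unfolding pu_def by simp
    qed
    moreover have "(\<Sum>i\<in>W - X. util_item pr q i c) \<le> rpu D r pr q X c"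
    proof -
      have "(\<Sum>i\<in>W - X. util_item pr q i c) = (\<Sum>i\<in>{i \<in> W - X. pr i > 0}. util_item pr q i c) + (\<Sum>i\<in>{i \<in> W - X. \<not> pr i > 0}. util_item pr q i c)"
        using finW by (intro sum_split_pred) auto
      moreover have "(\<Sum>i\<in>{i \<in> W - X. \<not> pr i > 0}. util_item pr q i c) \<le> 0"
        using c uneg by (intro sum_nonpos) blast
      moreover have "(\<Sum>i\<in>{i \<in> W - X. pr i > 0}. util_item pr q i c) \<le> rpu D r pr q X c"
        unfolding rpu_def
      proof (rule sum_mono2)
        show "finite {i \<in> D ! c. 0 < pr i \<and> (\<forall>x\<in>X. (x, i) \<in> r)}" using finD by auto
        show "{i \<in> W - X. 0 < pr i} \<subseteq> {i \<in> D ! c. 0 < pr i \<and> (\<forall>x\<in>X. (x, i) \<in> r)}"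
          using c ord by auto
        show "\<And>b. b \<in> {i \<in> D ! c. 0 < pr i \<and> (\<forall>x\<in>X. (x, i) \<in> r)} - {i \<in> W - X. 0 < pr i} \<Longrightarrow> 0 \<le> util_item pr q b c"
          using c upos by blast
      qed
      ultimately show ?thesis by linarith
    qed
    ultimately show ?thesis by linarith
  qed
  have "util D pr q W = (\<Sum>c\<in>CW. util_in pr q W c)" unfolding util_def CW_def by simp
  also have "\<dots> \<le> (\<Sum>c\<in>CW. pu pr q X c + rpu D r pr q X c)" using pt by (rule sum_mono)
  also have "\<dots> \<le> (\<Sum>c\<in>CX. pu pr q X c + rpu D r pr q X c)"
    using finCX CWX nn by (intro sum_mono2) auto
  also have "\<dots> = SUM_pu D pr q X + SUM_rpu D r pr q X"
    unfolding SUM_pu_def SUM_rpu_def CX_def by (simp add: sum.distrib)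
  finally show ?thesis .
qed

end
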